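(* For every even integer $n=2k>0$, the root scheme $$\big([(q,2),(p,2)]^{k},(q,1),(r,1)^{2k+1},(p,1)\big)$$ is realizable by polynomials of degree $n+1$. For every odd integer $n=2k+1>0$, the root scheme $$\big([(q,2),(p,2)]^{k},(q,2),(p,1),(r,1)^{2k+2},(p,1)\big)$$ is realizable by polynomials of degree $n+1$.
   Context: A root scheme is a finite sequence $((l_1,m_1),\dots,(l_k,m_k))$ with $l_i\in\{p,q,r\}$ and $m_i$ a positive integer. It is realizable by polynomials of degree $d$ if there exist real polynomials $P,Q$ such that $f=P-Q$ has degree $d$ and, listing the real roots of $P$, $Q$ and $f$ in increasing order as $\rho_1<\dots<\rho_k$, each $\rho_i$ is a root of exactly one of $P,Q,f$, with $l_i=p$ (resp. $q$, $r$) if $\rho_i$ is a root of $P$ (resp. $Q$, $f$), and $m_i$ is the multiplicity of $\rho_i$ as such a root. A sequence $T$ repeated $u$ times is written $T^u$ (empty if $u=0$), and $[\dots]$ denotes grouping. *)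

theory Defs
  imports "HOL-Computational_Algebra.Polynomial"
begin

datatype root_label = Lp | Lq | Lr

type_synonym root_scheme = "(root_label \<times> nat) list"

definition label_poly :: "real poly \<Rightarrow> real poly \<Rightarrow> root_label \<Rightarrow> real poly" where
  "label_poly P Q l = (case l of Lp \<Rightarrow> P | Lq \<Rightarrow> Q | Lr \<Rightarrow> P - Q)"

definition realizable :: "root_scheme \<Rightarrow> nat \<Rightarrow> bool" where
  "realizable S d \<longleftrightarrow> (\<exists>P Q :: real poly. degree (P - Q) = d \<and>
     (\<exists>rho :: real list. length rho = length S \<and> sorted_wrt (<) rho \<and>
        set rho = {x. poly P x = 0 \<or> poly Q x = 0 \<or> poly (P - Q) x = 0} \<and>
        (\<forall>i < length S.
           (poly P (rho ! i) = 0 \<longleftrightarrow> fst (S ! i) = Lp) \<and>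
           (poly Q (rho ! i) = 0 \<longleftrightarrow> fst (S ! i) = Lq) \<and>
           (poly (P - Q) (rho ! i) = 0 \<longleftrightarrow> fst (S ! i) = Lr) \<and>
           order (rho ! i) (label_poly P Q (fst (S ! i))) = snd (S ! i))))"

end

theory Submission
  imports Defs
begin



lemma order_prod_gen:
  fixes p :: "'i \<Rightarrow> real poly"
  assumes "finite I" "\<forall>i\<in>I. p i \<noteq> 0"
  shows "order a (\<Prod>i\<in>I. p i) = (\<Sum>i\<in>I. order a (p i))"
  using assms
proof (induction I rule: finite_induct)
  case empty then show ?case by simp
next
  case (insert x F)
  have "(\<Prod>i\<in>F. p i) \<noteq> 0" using insert by auto
  then have "p x * (\<Prod>i\<in>F. p i) \<noteq> 0" using insert by auto
  then show ?case using insert by (simp add: order_mult)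
qed

lemma order_lin: "order a [:c, 1::real:] = (if a = -c then 1 else 0)"
proof (cases "a = -c")
  case True
  have "[:c, 1::real:] = [:-a,1:]^1" using True by simp
  then show ?thesis using True order_power_n_n[of a 1] by simp
next
  case False
  then show ?thesis by (auto intro!: order_0I simp: algebra_simps)
qed

definition Pr :: "real \<Rightarrow> nat \<Rightarrow> nat \<Rightarrow> real poly" where
  "Pr N k e = (\<Prod>i<k. [:N^(2*i+e), 1:])"

lemma poly_Pr: "poly (Pr N k e) x = (\<Prod>i<k. x + N^(2*i+e))"
  by (simp add: Pr_def poly_prod add.commute)

lemma Pr_nz: "Pr N k e \<noteq> 0"
  by (simp add: Pr_def)

lemma degree_Pr: "degree (Pr N k e) = k"
  unfolding Pr_def by (subst degree_prod_eq_sum_degree) auto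

lemma lead_Pr: "lead_coeff (Pr N k e) = 1"
  unfolding Pr_def by (simp add: lead_coeff_prod)

lemma Pr_root:
  assumes "N > 1"
  shows "poly (Pr N k e) x = 0 \<longleftrightarrow> (\<exists>i<k. x = - (N^(2*i+e)))"
  unfolding poly_Pr by (auto simp: add_eq_0_iff)

lemma Pr_pos: assumes "N > 1" "x \<ge> 0" shows "poly (Pr N k e) x > 0"
  unfolding poly_Pr using assms by (intro prod_pos) (auto intro!: add_nonneg_pos)

lemma Pr_order:
  assumes "N > 1" "j < k"
  shows "order (- (N^(2*j+e))) (Pr N k e) = 1"
proof -
  have "order (- (N^(2*j+e))) (Pr N k e) = (\<Sum>i<k. order (- (N^(2*j+e))) [:N^(2*i+e), 1:])"
    unfolding Pr_def by (subst order_prod_gen) auto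
  also have "\<dots> = (\<Sum>i<k. if i = j then 1 else 0)"
    using assms by (intro sum.cong) (auto simp: order_lin power_inject_exp)
  also have "\<dots> = 1" using assms by simp
  finally show ?thesis .
qed

lemma prod_lower:
  fixes u v :: "'i \<Rightarrow> real"
  assumes "finite I" "\<forall>i\<in>I. 0 \<le> u i \<and> c * u i \<le> v i" "0 \<le> c"
  shows "c^card I * prod u I \<le> prod v I"
proof -
  have "c^card I * prod u I = (\<Prod>i\<in>I. c * u i)" by (simp add: prod.distrib)
  also have "\<dots> \<le> prod v I" using assms by (intro prod_mono) auto
  finally show ?thesis .
qed

lemma prod_upper:
  fixes u v :: "'i \<Rightarrow> real"
  assumes "finite I" "\<forall>i\<in>I. 0 \<le> v i \<and> v i \<le> c * u i"
  shows "prod v I \<le> c^card I * prod u I"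
proof -
  have "prod v I \<le> (\<Prod>i\<in>I. c * u i)" using assms by (intro prod_mono) auto
  also have "\<dots> = c^card I * prod u I" by (simp add: prod.distrib)
  finally show ?thesis .
qed

lemma ivt_roots:
  fixes f :: "real poly"
  assumes nz: "f \<noteq> 0" and deg: "degree f = n" and mono: "\<forall>i j. i < j \<longrightarrow> j \<le> n \<longrightarrow> t i < t j"
    and sgn: "\<forall>i<n. poly f (t i) * poly f (t (Suc i)) < 0"
  shows "\<exists>z. (\<forall>i<n. t i < z i \<and> z i < t (Suc i)) \<and> {x. poly f x = 0} = z ` {..<n}
              \<and> (\<forall>i<n. order (z i) f = 1) \<and> (\<forall>i j. i < j \<longrightarrow> j < n \<longrightarrow> z i < z j)"
proof -
  have "\<forall>i. \<exists>x. i < n \<longrightarrow> t i < x \<and> x < t (Suc i) \<and> poly f x = 0"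
    using sgn mono poly_IVT by (metis lessI less_eq_Suc_le)
  then obtain z where z: "\<And>i. i < n \<Longrightarrow> t i < z i \<and> z i < t (Suc i) \<and> poly f (z i) = 0"
    by metis
  have zmono: "z i < z j" if "i < j" "j < n" for i j
  proof -
    have "t (Suc i) \<le> t j" using mono[rule_format, of "Suc i" j] that by (cases "Suc i = j") auto
    then show ?thesis using z[of i] z[of j] that by auto
  qed
  have inj: "inj_on z {..<n}"
    by (rule inj_onI) (metis lessThan_iff nat_neq_iff zmono less_irrefl)
  have cardz: "card (z ` {..<n}) = n" using inj by (simp add: card_image)
  have sub: "z ` {..<n} \<subseteq> {x. poly f x = 0}" using z by auto
  have fin: "finite {x. poly f x = 0}" using nz poly_roots_finite by blast
  have cb: "card {x. poly f x = 0} \<le> n" using card_poly_roots_bound[OF nz] deg by simp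
  have eq: "{x. poly f x = 0} = z ` {..<n}"
    using card_seteq[OF fin sub] cardz cb by simp
  have ord: "order (z i) f = 1" if i: "i < n" for i
  proof (rule ccontr)
    assume ne: "order (z i) f \<noteq> 1"
    have "order (z i) f \<noteq> 0" using z[OF i] nz order_root by blast
    then have "2 \<le> order (z i) f" using ne by simp
    then have "[:-z i, 1:]^2 dvd f" using order_divides by blast
    then obtain g where g: "f = [:-z i, 1:]^2 * g" by (elim dvdE)
    have gnz: "g \<noteq> 0" using g nz by auto
    have dg: "degree f = 2 + degree g" using g gnz by (simp add: degree_mult_eq degree_power_eq)
    have "z ` ({..<n} - {i}) \<subseteq> {x. poly g x = 0}"
    proof
      fix x assume "x \<in> z ` ({..<n} - {i})"
      then obtain j where j: "j < n" "j \<noteq> i" "x = z j" by auto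
      have "z j \<noteq> z i" using inj j i by (metis inj_onD lessThan_iff)
      moreover have "poly f (z j) = 0" using z[OF j(1)] by simp
      ultimately show "x \<in> {x. poly g x = 0}" using g j by (simp)
    qed
    then have "card (z ` ({..<n} - {i})) \<le> card {x. poly g x = 0}"
      using poly_roots_finite[OF gnz] by (intro card_mono) auto
    also have "\<dots> \<le> degree g" using card_poly_roots_bound[OF gnz] .
    finally have "card (z ` ({..<n} - {i})) \<le> degree g" .
    moreover have "card (z ` ({..<n} - {i})) = n - 1"
      using inj i by (subst card_image) (auto intro: inj_on_subset)
    ultimately show False using dg deg i by linarith
  qed
  show ?thesis using z eq ord zmono by blast
qed

lemma realizable_intro:
  assumes "degree (P - Q) = d" "S = map s [0..<L]" "\<forall>i j. i < j \<longrightarrow> j < L \<longrightarrow> r i < r j"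
    "{x. poly P x = 0 \<or> poly Q x = 0 \<or> poly (P - Q) x = 0} = r ` {..<L}"
    "\<forall>i<L. (poly P (r i) = 0 \<longleftrightarrow> fst (s i) = Lp) \<and>
           (poly Q (r i) = 0 \<longleftrightarrow> fst (s i) = Lq) \<and>
           (poly (P - Q) (r i) = 0 \<longleftrightarrow> fst (s i) = Lr) \<and>
           order (r i) (label_poly P Q (fst (s i))) = snd (s i)"
  shows "realizable S d"
  unfolding realizable_def
proof (intro exI conjI)
  show "degree (P - Q) = d" by fact
  show "length (map r [0..<L]) = length S" using assms(2) by simp
  show "sorted_wrt (<) (map r [0..<L])"
    using assms(3) by (auto simp: sorted_wrt_iff_nth_less)
  show "set (map r [0..<L]) = {x. poly P x = 0 \<or> poly Q x = 0 \<or> poly (P - Q) x = 0}"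
    using assms(4) by (auto simp: lessThan_atLeast0)
  show "\<forall>i<length S. (poly P (map r [0..<L] ! i) = 0 \<longleftrightarrow> fst (S ! i) = Lp) \<and>
           (poly Q (map r [0..<L] ! i) = 0 \<longleftrightarrow> fst (S ! i) = Lq) \<and>
           (poly (P - Q) (map r [0..<L] ! i) = 0 \<longleftrightarrow> fst (S ! i) = Lr) \<and>
           order (map r [0..<L] ! i) (label_poly P Q (fst (S ! i))) = snd (S ! i)"
    using assms(2,5) by simp
qed

lemma concat_rep_nth:
  "i < 2*k \<Longrightarrow> concat (replicate k [a, b]) ! i = (if even i then a else b)"
proof (induction k arbitrary: i)
  case 0 then show ?case by simp
next
  case (Suc k)
  show ?case
  proof (cases i)
    case 0 then show ?thesis by simp
  next
    case (Suc i')
    then show ?thesis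
    proof (cases i')
      case 0 then show ?thesis using Suc by simp
    next
      case (Suc i'')
      then show ?thesis using \<open>i = Suc i'\<close> Suc.prems Suc.IH[of i''] by simp
    qed
  qed
qed

lemma length_concat_rep: "length (concat (replicate k [a, b])) = 2*k"
  by (induction k) auto




lemma four_pow: "(2::real)^(j*2) = 4^j"
proof -
  show ?thesis by (induction j) (simp_all add: power_add)
qed

lemma avg_le: "(a::real) \<le> w \<Longrightarrow> 0 < x \<Longrightarrow> (a + w)/2 \<le> x + w" by (simp add: field_simps)

lemma case1_bounds:
  fixes k l :: nat and N c :: real
  assumes k: "k > 0" and c: "c = 4^k" and N: "N = 4*c^2"
  shows "l < k \<Longrightarrow> N^(2*l) * (\<Prod>i<k. N^(2*l) + N^(2*i+1))^2 \<ge> (2*c) * (2*N^(2*k-1)) * (\<Prod>i<k. N^(2*l) + N^(2*i))^2"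
    and "l < k \<Longrightarrow> N^(2*l+1) * (\<Prod>i<k. N^(2*l+1) + N^(2*i+1))^2 \<le> c * N^(2*k-1) * (\<Prod>i<k. N^(2*l+1) + N^(2*i))^2"
proof -
  have c1: "c \<ge> 1" using c by simp
  have N1: "N > 1" using N c1 by (smt (verit) one_le_power power2_eq_square)
  have N0: "N > 0" using N1 by simp
  have pw: "N^a \<le> N^b" if "a \<le> b" for a b using N1 that by (simp add: power_increasing)
  {
    assume l: "l < k"
    define x where "x = N^(2*l)"
    have x0: "x > 0" using N0 x_def by simp
    have split: "{..<k} = {..<l} \<union> {l..<k}" using l by auto
    have a: "(\<Prod>i<l. x + N^(2*i)) \<le> (\<Prod>i<l. x + N^(2*i+1))"
      using x0 N1 by (intro prod_mono) (auto intro!: pw)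
    have b: "(N/2)^(k-l) * (\<Prod>i\<in>{l..<k}. x + N^(2*i)) \<le> (\<Prod>i\<in>{l..<k}. x + N^(2*i+1))"
    proof -
      have "(N/2)^card {l..<k} * (\<Prod>i\<in>{l..<k}. x + N^(2*i)) \<le> (\<Prod>i\<in>{l..<k}. x + N^(2*i+1))"
      proof (rule prod_lower)
        show "\<forall>i\<in>{l..<k}. 0 \<le> x + N ^ (2 * i) \<and> N / 2 * (x + N ^ (2 * i)) \<le> x + N ^ (2 * i + 1)"
        proof
          fix i assume "i \<in> {l..<k}"
          then have "x \<le> N^(2*i)" unfolding x_def by (intro pw) auto
          then have h: "N*x \<le> N*N^(2*i)" using N0 by simp
          have e: "N / 2 * (x + N ^ (2 * i)) = (N*x + N*N^(2*i))/2" by (simp add: algebra_simps)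
          have e2: "N^(2*i+1) = N*N^(2*i)" by simp
          show "0 \<le> x + N ^ (2 * i) \<and> N / 2 * (x + N ^ (2 * i)) \<le> x + N ^ (2 * i + 1)"
          proof
            show "0 \<le> x + N ^ (2 * i)" using x0 N0 zero_less_power[of N "2*i"] by linarith
            have "(N * x + N * N ^ (2 * i)) / 2 \<le> x + N * N ^ (2 * i)" using avg_le[OF h x0] .
            then show "N / 2 * (x + N ^ (2 * i)) \<le> x + N ^ (2 * i + 1)" unfolding e e2 .
          qed
        qed
      qed (use N0 in auto)
      then show ?thesis by simp
    qed
    have A0: "0 \<le> (\<Prod>i<l. x + N^(2*i))" "0 \<le> (\<Prod>i\<in>{l..<k}. x + N^(2*i))"
      using x0 N0 by (auto intro!: prod_nonneg)
    have "(N/2)^(k-l) * (\<Prod>i<k. x + N^(2*i)) = (\<Prod>i<l. x + N^(2*i)) * ((N/2)^(k-l) * (\<Prod>i\<in>{l..<k}. x + N^(2*i)))"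
      unfolding split by (subst prod.union_disjoint) auto
    also have "\<dots> \<le> (\<Prod>i<l. x + N^(2*i+1)) * (\<Prod>i\<in>{l..<k}. x + N^(2*i+1))"
      using a b A0 N0 by (intro mult_mono) auto
    also have "\<dots> = (\<Prod>i<k. x + N^(2*i+1))"
      unfolding split by (subst prod.union_disjoint) auto
    finally have AB: "(N/2)^(k-l) * (\<Prod>i<k. x + N^(2*i)) \<le> (\<Prod>i<k. x + N^(2*i+1))" .
    have Ap: "0 \<le> (N/2)^(k-l) * (\<Prod>i<k. x + N^(2*i))" using x0 N0
      by (intro mult_nonneg_nonneg prod_nonneg zero_le_power) auto
    have sq: "((N/2)^(k-l) * (\<Prod>i<k. x + N^(2*i)))^2 \<le> (\<Prod>i<k. x + N^(2*i+1))^2"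
      using AB Ap by (intro power_mono) auto
    obtain m where km: "k = l + m" using l by (metis less_imp_add_positive)
    have key: "(2*c) * (2*N^(2*k-1)) \<le> x * ((N/2)^(k-l))^2"
    proof -
      have f4: "(4::real)^m = 2^(2*m)" by (simp add: power_mult)
      have e1: "N^(2*k) = N * N^(2*k-1)" using k
        by (metis Suc_pred' power_Suc nat_0_less_mult_iff zero_less_numeral)
      have "x * ((N/2)^(k-l))^2 = N^(2*l) * (N^(2*m) / 4^m)" unfolding x_def using km
        by (simp add: power_divide power_mult_distrib f4 mult.commute flip: power_mult)
      also have "\<dots> = N^(2*k) / 4^m" using km by (simp add: power_add algebra_simps)
      finally have eq: "x * ((N/2)^(k-l))^2 = N^(2*k) / 4^m" .
      have "(4::real)^m \<le> 4^k" using km by (intro power_increasing) auto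
      then have m4: "(4::real)^m \<le> c" using c by simp
      have "(2*c) * (2*N^(2*k-1)) * 4^m \<le> (2*c) * (2*N^(2*k-1)) * c"
        using m4 c1 N0 by (intro mult_left_mono) auto
      also have "\<dots> = N^(2*k)" using e1 N by (simp add: power2_eq_square)
      finally have "(2*c) * (2*N^(2*k-1)) * 4^m \<le> N^(2*k)" .
      then show ?thesis unfolding eq by (simp add: field_simps)
    qed
    have Bp: "0 \<le> (\<Prod>i<k. x + N^(2*i))^2" by simp
    have "(2*c) * (2*N^(2*k-1)) * (\<Prod>i<k. x + N^(2*i))^2 \<le> x * ((N/2)^(k-l))^2 * (\<Prod>i<k. x + N^(2*i))^2"
      using key Bp by (rule mult_right_mono)
    also have "\<dots> = x * ((N/2)^(k-l) * (\<Prod>i<k. x + N^(2*i)))^2" by (simp add: power_mult_distrib)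
    also have "\<dots> \<le> x * (\<Prod>i<k. x + N^(2*i+1))^2" using sq x0 by (intro mult_left_mono) auto
    finally show "N^(2*l) * (\<Prod>i<k. N^(2*l) + N^(2*i+1))^2 \<ge> (2*c) * (2*N^(2*k-1)) * (\<Prod>i<k. N^(2*l) + N^(2*i))^2"
      unfolding x_def .
  }
  {
    assume l: "l < k"
    define x where "x = N^(2*l+1)"
    have x0: "x > 0" using N0 x_def by simp
    have split: "{..<k} = {..<Suc l} \<union> {Suc l..<k}" using l by auto
    have a: "(\<Prod>i<Suc l. x + N^(2*i+1)) \<le> 2^card {..<Suc l} * (\<Prod>i<Suc l. x + N^(2*i))"
    proof (rule prod_upper)
      show "\<forall>i\<in>{..<Suc l}. 0 \<le> x + N ^ (2 * i + 1) \<and> x + N ^ (2 * i + 1) \<le> 2 * (x + N ^ (2 * i))"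
      proof
        fix i assume "i \<in> {..<Suc l}"
        then have h: "N^(2*i+1) \<le> x" unfolding x_def by (intro pw) auto
        have p: "0 < N^(2*i)" "0 < N^(2*i+1)" using N0 by auto
        show "0 \<le> x + N ^ (2 * i + 1) \<and> x + N ^ (2 * i + 1) \<le> 2 * (x + N ^ (2 * i))"
          using h p x0 by (smt (verit))
      qed
    qed auto
    have b: "(\<Prod>i\<in>{Suc l..<k}. x + N^(2*i+1)) \<le> (2*N)^card {Suc l..<k} * (\<Prod>i\<in>{Suc l..<k}. x + N^(2*i))"
    proof (rule prod_upper)
      show "\<forall>i\<in>{Suc l..<k}. 0 \<le> x + N ^ (2 * i + 1) \<and> x + N ^ (2 * i + 1) \<le> (2*N) * (x + N ^ (2 * i))"
      proof
        fix i assume "i \<in> {Suc l..<k}"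
        then have h: "x \<le> N^(2*i)" unfolding x_def by (intro pw) auto
        have p: "0 < N^(2*i)" using N0 by auto
        have e: "N^(2*i+1) = N*N^(2*i)" "(2*N) * (x + N ^ (2 * i)) = 2*(N*x) + 2*(N*N^(2*i))"
          by (simp_all add: algebra_simps)
        have q: "N^(2*i) \<le> N*N^(2*i)" "0 \<le> N*x" using N1 p x0 by auto
        show "0 \<le> x + N ^ (2 * i + 1) \<and> x + N ^ (2 * i + 1) \<le> (2*N) * (x + N ^ (2 * i))"
          unfolding e using h p x0 q by (smt (verit))
      qed
    qed auto
    obtain m where km: "k = Suc l + m" using less_imp_Suc_add[OF l] by auto
    have cards: "card {..<Suc l} = Suc l" "card {Suc l..<k} = m" using km by auto
    have A0: "0 \<le> (\<Prod>i<Suc l. x + N^(2*i+1))" "0 \<le> (\<Prod>i\<in>{Suc l..<k}. x + N^(2*i+1))"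
      by (rule prod_nonneg, use x0 N0 in \<open>simp add: add_nonneg_nonneg less_imp_le\<close>)+
    have A1: "0 \<le> (\<Prod>i<Suc l. x + N^(2*i))"
      by (rule prod_nonneg, use x0 N0 in \<open>simp add: add_nonneg_nonneg less_imp_le\<close>)+
    have "(\<Prod>i<k. x + N^(2*i+1)) = (\<Prod>i<Suc l. x + N^(2*i+1)) * (\<Prod>i\<in>{Suc l..<k}. x + N^(2*i+1))"
      unfolding split by (subst prod.union_disjoint) auto
    also have "\<dots> \<le> (2^Suc l * (\<Prod>i<Suc l. x + N^(2*i))) * ((2*N)^m * (\<Prod>i\<in>{Suc l..<k}. x + N^(2*i)))"
      by (rule mult_mono[OF a[unfolded cards] b[unfolded cards]])
         (use A0 A1 in \<open>auto intro!: mult_nonneg_nonneg\<close>)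
    also have "\<dots> = (2^Suc l * (2*N)^m) * (\<Prod>i<k. x + N^(2*i))"
      unfolding split by (subst prod.union_disjoint) auto
    finally have AB: "(\<Prod>i<k. x + N^(2*i+1)) \<le> (2^Suc l * (2*N)^m) * (\<Prod>i<k. x + N^(2*i))" .
    have Bp: "0 \<le> (\<Prod>i<k. x + N^(2*i+1))" using x0 N0 by (auto intro!: prod_nonneg)
    have sq: "(\<Prod>i<k. x + N^(2*i+1))^2 \<le> ((2^Suc l * (2*N)^m) * (\<Prod>i<k. x + N^(2*i)))^2"
      using AB Bp by (intro power_mono) auto
    have key: "x * (2^Suc l * (2*N)^m)^2 = c * N^(2*k-1)"
    proof -
      have e2: "2*k-1 = (2*l+1) + 2*m" using km by simp
      have "x * (2^Suc l * (2*N)^m)^2 = N^(2*l+1) * (4^Suc l * 4^m * N^(2*m))"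
        unfolding x_def by (simp add: power_mult_distrib power_mult[symmetric] mult.commute four_pow)
      also have "\<dots> = 4^k * N^(2*k-1)" unfolding e2 km by (simp add: power_add algebra_simps four_pow)
      finally show ?thesis using c by simp
    qed
    have "x * (\<Prod>i<k. x + N^(2*i+1))^2 \<le> x * ((2^Suc l * (2*N)^m) * (\<Prod>i<k. x + N^(2*i)))^2"
      using sq x0 by (intro mult_left_mono) auto
    also have "\<dots> = x * (2^Suc l * (2*N)^m)^2 * (\<Prod>i<k. x + N^(2*i))^2" by (simp add: power_mult_distrib)
    also have "\<dots> = c * N^(2*k-1) * (\<Prod>i<k. x + N^(2*i))^2" using key by simp
    finally show "N^(2*l+1) * (\<Prod>i<k. N^(2*l+1) + N^(2*i+1))^2 \<le> c * N^(2*k-1) * (\<Prod>i<k. N^(2*l+1) + N^(2*i))^2"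
      unfolding x_def .
  }
qed




lemma even_ratio:
  fixes N x :: real
  assumes N1: "N > 1" and l: "l \<le> k" and x_def: "x = N^(2*l)"
  shows "(N/2)^(k-l) * (\<Prod>i<k. x + N^(2*i)) \<le> (\<Prod>i<k. x + N^(2*i+1))"
proof -
  have N0: "N > 0" using N1 by simp
  have pw: "N^a \<le> N^b" if "a \<le> b" for a b using N1 that by (simp add: power_increasing)
    have x0: "x > 0" using N0 x_def by simp
    have split: "{..<k} = {..<l} \<union> {l..<k}" using l by auto
    have a: "(\<Prod>i<l. x + N^(2*i)) \<le> (\<Prod>i<l. x + N^(2*i+1))"
      using x0 N1 by (intro prod_mono) (auto intro!: pw)
    have b: "(N/2)^(k-l) * (\<Prod>i\<in>{l..<k}. x + N^(2*i)) \<le> (\<Prod>i\<in>{l..<k}. x + N^(2*i+1))"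
    proof -
      have "(N/2)^card {l..<k} * (\<Prod>i\<in>{l..<k}. x + N^(2*i)) \<le> (\<Prod>i\<in>{l..<k}. x + N^(2*i+1))"
      proof (rule prod_lower)
        show "\<forall>i\<in>{l..<k}. 0 \<le> x + N ^ (2 * i) \<and> N / 2 * (x + N ^ (2 * i)) \<le> x + N ^ (2 * i + 1)"
        proof
          fix i assume "i \<in> {l..<k}"
          then have "x \<le> N^(2*i)" unfolding x_def by (intro pw) auto
          then have h: "N*x \<le> N*N^(2*i)" using N0 by simp
          have e: "N / 2 * (x + N ^ (2 * i)) = (N*x + N*N^(2*i))/2" by (simp add: algebra_simps)
          have e2: "N^(2*i+1) = N*N^(2*i)" by simp
          show "0 \<le> x + N ^ (2 * i) \<and> N / 2 * (x + N ^ (2 * i)) \<le> x + N ^ (2 * i + 1)"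
          proof
            show "0 \<le> x + N ^ (2 * i)" using x0 N0 zero_less_power[of N "2*i"] by linarith
            have "(N * x + N * N ^ (2 * i)) / 2 \<le> x + N * N ^ (2 * i)" using avg_le[OF h x0] .
            then show "N / 2 * (x + N ^ (2 * i)) \<le> x + N ^ (2 * i + 1)" unfolding e e2 .
          qed
        qed
      qed (use N0 in auto)
      then show ?thesis by simp
    qed
    have A0: "0 \<le> (\<Prod>i<l. x + N^(2*i))" "0 \<le> (\<Prod>i\<in>{l..<k}. x + N^(2*i))"
      using x0 N0 by (auto intro!: prod_nonneg)
    have "(N/2)^(k-l) * (\<Prod>i<k. x + N^(2*i)) = (\<Prod>i<l. x + N^(2*i)) * ((N/2)^(k-l) * (\<Prod>i\<in>{l..<k}. x + N^(2*i)))"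
      unfolding split by (subst prod.union_disjoint) auto
    also have "\<dots> \<le> (\<Prod>i<l. x + N^(2*i+1)) * (\<Prod>i\<in>{l..<k}. x + N^(2*i+1))"
      using a b A0 N0 by (intro mult_mono) auto
    also have "\<dots> = (\<Prod>i<k. x + N^(2*i+1))"
      unfolding split by (subst prod.union_disjoint) auto
    finally show ?thesis .
qed

lemma odd_ratio:
  fixes N x :: real
  assumes N1: "N > 1" and l: "l < k" and x_def: "x = N^(2*l+1)"
  shows "(\<Prod>i<k. x + N^(2*i+1)) \<le> (2^Suc l * (2*N)^(k - Suc l)) * (\<Prod>i<k. x + N^(2*i))"
proof -
  have N0: "N > 0" using N1 by simp
  have pw: "N^a \<le> N^b" if "a \<le> b" for a b using N1 that by (simp add: power_increasing)
    have x0: "x > 0" using N0 x_def by simp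
    have split: "{..<k} = {..<Suc l} \<union> {Suc l..<k}" using l by auto
    have a: "(\<Prod>i<Suc l. x + N^(2*i+1)) \<le> 2^card {..<Suc l} * (\<Prod>i<Suc l. x + N^(2*i))"
    proof (rule prod_upper)
      show "\<forall>i\<in>{..<Suc l}. 0 \<le> x + N ^ (2 * i + 1) \<and> x + N ^ (2 * i + 1) \<le> 2 * (x + N ^ (2 * i))"
      proof
        fix i assume "i \<in> {..<Suc l}"
        then have h: "N^(2*i+1) \<le> x" unfolding x_def by (intro pw) auto
        have p: "0 < N^(2*i)" "0 < N^(2*i+1)" using N0 by auto
        show "0 \<le> x + N ^ (2 * i + 1) \<and> x + N ^ (2 * i + 1) \<le> 2 * (x + N ^ (2 * i))"
          using h p x0 by (smt (verit))
      qed
    qed auto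
    have b: "(\<Prod>i\<in>{Suc l..<k}. x + N^(2*i+1)) \<le> (2*N)^card {Suc l..<k} * (\<Prod>i\<in>{Suc l..<k}. x + N^(2*i))"
    proof (rule prod_upper)
      show "\<forall>i\<in>{Suc l..<k}. 0 \<le> x + N ^ (2 * i + 1) \<and> x + N ^ (2 * i + 1) \<le> (2*N) * (x + N ^ (2 * i))"
      proof
        fix i assume "i \<in> {Suc l..<k}"
        then have h: "x \<le> N^(2*i)" unfolding x_def by (intro pw) auto
        have p: "0 < N^(2*i)" using N0 by auto
        have e: "N^(2*i+1) = N*N^(2*i)" "(2*N) * (x + N ^ (2 * i)) = 2*(N*x) + 2*(N*N^(2*i))"
          by (simp_all add: algebra_simps)
        have q: "N^(2*i) \<le> N*N^(2*i)" "0 \<le> N*x" using N1 p x0 by auto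
        show "0 \<le> x + N ^ (2 * i + 1) \<and> x + N ^ (2 * i + 1) \<le> (2*N) * (x + N ^ (2 * i))"
          unfolding e using h p x0 q by (smt (verit))
      qed
    qed auto
    obtain m where km: "k = Suc l + m" using less_imp_Suc_add[OF l] by auto
    have cards: "card {..<Suc l} = Suc l" "card {Suc l..<k} = m" using km by auto
    have A0: "0 \<le> (\<Prod>i<Suc l. x + N^(2*i+1))" "0 \<le> (\<Prod>i\<in>{Suc l..<k}. x + N^(2*i+1))"
      by (rule prod_nonneg, use x0 N0 in \<open>simp add: add_nonneg_nonneg less_imp_le\<close>)+
    have A1: "0 \<le> (\<Prod>i<Suc l. x + N^(2*i))"
      by (rule prod_nonneg, use x0 N0 in \<open>simp add: add_nonneg_nonneg less_imp_le\<close>)+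
    have "(\<Prod>i<k. x + N^(2*i+1)) = (\<Prod>i<Suc l. x + N^(2*i+1)) * (\<Prod>i\<in>{Suc l..<k}. x + N^(2*i+1))"
      unfolding split by (subst prod.union_disjoint) auto
    also have "\<dots> \<le> (2^Suc l * (\<Prod>i<Suc l. x + N^(2*i))) * ((2*N)^m * (\<Prod>i\<in>{Suc l..<k}. x + N^(2*i)))"
      by (rule mult_mono[OF a[unfolded cards] b[unfolded cards]])
         (use A0 A1 in \<open>auto intro!: mult_nonneg_nonneg\<close>)
    also have "\<dots> = (2^Suc l * (2*N)^m) * (\<Prod>i<k. x + N^(2*i))"
      unfolding split by (subst prod.union_disjoint) auto
    finally show ?thesis using km by simp
qed

lemma ring1: "(d2::real) = c*p \<Longrightarrow> d2*((8*c)*(2*q)*x*a2) = (16*c^2)*(q*x*p)*a2"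
  by (simp add: algebra_simps power2_eq_square)

lemma case2_bound_even:
  fixes k l :: nat and N c x :: real
  assumes c: "c = 4^k" and N: "N = 16*c^2" and l: "l \<le> k" and x: "x = N^(2*l)"
  shows "(\<Prod>i<Suc k. x + N^(2*i))^2 \<le> 4*c*N^(2*k)*x*(\<Prod>i<k. x + N^(2*i+1))^2"
proof -
  have c1: "c \<ge> 1" using c by simp
  have N1: "N > 1" using N c1 by (smt (verit) one_le_power power2_eq_square)
  have N0: "N > 0" using N1 by simp
  have x0: "x > 0" using x N0 by simp
  obtain m where km: "k = l + m" using l by (metis le_add_diff_inverse)
  define y where "y = (N/2)^m"
  define A where "A = (\<Prod>i<k. x + N^(2*i+1))"
  define B0 where "B0 = (\<Prod>i<k. x + N^(2*i))"
  have y0: "y > 0" using N0 y_def by simp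
  have B00: "B0 \<ge> 0" unfolding B0_def using x0 N0 by (auto intro!: prod_nonneg)
  have A0: "A \<ge> 0" unfolding A_def using x0 N0 by (auto intro!: prod_nonneg)
  have r: "y * B0 \<le> A" using even_ratio[OF N1 l x] km unfolding y_def A_def B0_def by simp
  have t: "x + N^(2*k) \<le> 2*N^(2*k)" using x N1 l by (simp add: power_increasing)
  have t0: "0 \<le> x + N^(2*k)" using x0 N0 by (simp add: add_nonneg_nonneg less_imp_le)
  have "y * (B0 * (x + N^(2*k))) \<le> A * (2*N^(2*k))"
    using mult_mono[OF r t] t0 y0 B00 A0 by (simp add: mult.assoc)
  moreover have "0 \<le> y * (B0 * (x + N^(2*k)))" using y0 B00 t0 by simp
  ultimately have sq: "(y * (B0 * (x + N^(2*k))))^2 \<le> (A * (2*N^(2*k)))^2"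
    by (intro power_mono) auto
  have Bdef: "(\<Prod>i<Suc k. x + N^(2*i)) = B0 * (x + N^(2*k))" unfolding B0_def by simp
  have y2: "y^2 * 4^m = N^(2*m)" unfolding y_def
    by (simp add: power_divide power_mult_distrib four_pow mult.commute flip: power_mult)
  have e4: "N^(2*k) * N^(2*k) = N^(2*m) * N^(2*k) * x" using km x by (simp add: power_add[symmetric] algebra_simps)
  have m4: "(4::real)^m \<le> c" using c km by (simp add: power_increasing)
  have "(A * (2*N^(2*k)))^2 = 4 * (y^2 * 4^m) * N^(2*k) * x * A^2"
    unfolding y2 power_mult_distrib using e4 by (simp add: power2_eq_square algebra_simps)
  also have "\<dots> \<le> 4 * (y^2 * c) * N^(2*k) * x * A^2"
    using m4 y0 N0 x0 by (intro mult_right_mono mult_left_mono) auto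
  also have "\<dots> = y^2 * (4*c*N^(2*k)*x*A^2)" by (simp add: algebra_simps)
  finally have R: "(A * (2*N^(2*k)))^2 \<le> y^2 * (4*c*N^(2*k)*x*A^2)" .
  have L: "y^2 * (\<Prod>i<Suc k. x + N^(2*i))^2 = (y * (B0 * (x + N^(2*k))))^2"
    unfolding Bdef by (simp add: power_mult_distrib)
  have "y^2 * (\<Prod>i<Suc k. x + N^(2*i))^2 \<le> y^2 * (4*c*N^(2*k)*x*A^2)"
    unfolding L using sq R by linarith
  then show ?thesis using y0 unfolding A_def by simp
qed

lemma case2_bound_odd:
  fixes k l :: nat and N c x :: real
  assumes c: "c = 4^k" and N: "N = 16*c^2" and l: "l < k" and x: "x = N^(2*l+1)"
  shows "(8*c)*(2*N^(2*k))*x*(\<Prod>i<k. x + N^(2*i+1))^2 \<le> (\<Prod>i<Suc k. x + N^(2*i))^2"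
proof -
  have c1: "c \<ge> 1" using c by simp
  have N1: "N > 1" using N c1 by (smt (verit) one_le_power power2_eq_square)
  have N0: "N > 0" using N1 by simp
  have x0: "x > 0" using x N0 by simp
  obtain m where km: "k = Suc l + m" using less_imp_Suc_add[OF l] by auto
  define D where "D = 2^Suc l * (2*N)^m"
  define A where "A = (\<Prod>i<k. x + N^(2*i+1))"
  define B0 where "B0 = (\<Prod>i<k. x + N^(2*i))"
  have D0: "D > 0" using N0 D_def by simp
  have B00: "B0 \<ge> 0" unfolding B0_def using x0 N0 by (auto intro!: prod_nonneg)
  have A0: "A \<ge> 0" unfolding A_def using x0 N0 by (auto intro!: prod_nonneg)
  have r: "A \<le> D * B0" using odd_ratio[OF N1 l x] km unfolding D_def A_def B0_def by simp
  have t: "N^(2*k) \<le> x + N^(2*k)" using x0 by simp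
  have "A * N^(2*k) \<le> D * (B0 * (x + N^(2*k)))"
  proof -
    have "A * N^(2*k) \<le> (D * B0) * N^(2*k)" using r N0 by (intro mult_right_mono) auto
    also have "\<dots> \<le> (D * B0) * (x + N^(2*k))" using t D0 B00 by (intro mult_left_mono) auto
    finally show ?thesis by (simp add: mult.assoc)
  qed
  then have sq: "(A * N^(2*k))^2 \<le> (D * (B0 * (x + N^(2*k))))^2"
    using A0 N0 by (intro power_mono) auto
  have Bdef: "(\<Prod>i<Suc k. x + N^(2*i)) = B0 * (x + N^(2*k))" unfolding B0_def by simp
  have D2: "D^2 = c * N^(2*m)" unfolding D_def c km
    by (simp add: power_mult_distrib four_pow power_add mult.commute flip: power_mult)
  have e: "N^(2*k) * N^(2*k) = N * N^(2*k) * x * N^(2*m)" using km x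
    by (simp add: power_add[symmetric] algebra_simps)
  have "D^2 * ((8*c)*(2*N^(2*k))*x*A^2) = (16*c^2) * (N^(2*k)*x*N^(2*m)) * A^2"
    using ring1[OF D2] .
  also have "\<dots> = (N^(2*k) * N^(2*k)) * A^2" unfolding e N[symmetric] by (simp add: mult.assoc)
  also have "\<dots> = (A * N^(2*k))^2" by (simp add: power2_eq_square algebra_simps)
  also have "\<dots> \<le> D^2 * (\<Prod>i<Suc k. x + N^(2*i))^2"
    using sq unfolding Bdef by (simp add: power_mult_distrib)
  finally show ?thesis using D0 unfolding A_def by simp
qed




lemma scheme1:
  "concat (replicate k [(Lq, 2), (Lp, 2)]) @ [(Lq, 1)] @ replicate (2 * k + 1) (Lr, 1) @ [(Lp, 1)]
   = map (\<lambda>i. if i < 2*k then (if even i then (Lq,2) else (Lp,2)) else if i = 2*k then (Lq,1)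
              else if i < 4*k+2 then (Lr,1) else (Lp,1)) [0..<4*k+3]"
  by (rule nth_equalityI) (auto simp: nth_append length_concat_rep concat_rep_nth nth_Cons' simp del: replicate.simps)

lemma scheme2:
  "concat (replicate k [(Lq, 2), (Lp, 2)]) @ [(Lq, 2), (Lp, 1)] @ replicate (2 * k + 2) (Lr, 1) @ [(Lp, 1)]
   = map (\<lambda>i. if i \<le> 2*k then (if even i then (Lq,2) else (Lp,2)) else if i = 2*k+1 then (Lp,1)
              else if i < 4*k+4 then (Lr,1) else (Lp,1)) [0..<4*k+5]"
  by (rule nth_equalityI) (auto simp: nth_append length_concat_rep concat_rep_nth nth_Cons' simp del: replicate.simps)

lemma order_neg_lin: "order a [:b, -1::real:] = (if a = b then 1 else 0)"
proof -
  have "[:b, -1::real:] = - [:-b, 1:]" by simp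
  then have "order a [:b, -1::real:] = order a [:-b, 1:]" by (metis order_uminus)
  then show ?thesis by (simp add: order_lin)
qed


lemma case1:
  assumes k: "k > 0"
  shows "realizable (concat (replicate k [(Lq, 2), (Lp, 2)]) @ [(Lq, 1)] @
                        replicate (2 * k + 1) (Lr, 1) @ [(Lp, 1)]) (2 * k + 1)"
proof -
  define c :: real where "c = 4^k"
  define N :: real where "N = 4*c^2"
  define K :: real where "K = 2*c"
  define b :: real where "b = 2*N^(2*k-1)"
  define A where "A = Pr N k 0"
  define B where "B = Pr N k 1"
  define P where "P = smult K ([:b,-1:] * A^2)"
  define Q where "Q = [:0,1:] * B^2"
  define f where "f = P - Q"
  have c1: "c \<ge> 1" using c_def by simp
  have N1: "N > 1" using N_def c1 by (smt (verit) one_le_power power2_eq_square)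
  have N0: "N > 0" using N1 by simp
  have K0: "K > 0" using K_def c1 by simp
  have b0: "b > 0" using b_def N0 by simp
  have Nb: "N^(2*k-1) < b" using b_def N0 by simp
  have pA: "poly A x = (\<Prod>i<k. x + N^(2*i))" for x unfolding A_def poly_Pr by simp
  have pB: "poly B x = (\<Prod>i<k. x + N^(2*i+1))" for x unfolding B_def poly_Pr by simp
  have pP: "poly P x = K*(b-x)*(poly A x)^2" for x unfolding P_def by (simp add: algebra_simps)
  have pQ: "poly Q x = x*(poly B x)^2" for x unfolding Q_def by (simp add: algebra_simps)
  have pf: "poly f x = K*(b-x)*(poly A x)^2 - x*(poly B x)^2" for x unfolding f_def using pP pQ by simp
  have Apos: "x \<ge> 0 \<Longrightarrow> poly A x > 0" for x unfolding A_def using N1 by (rule Pr_pos)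
  have Bpos: "x \<ge> 0 \<Longrightarrow> poly B x > 0" for x unfolding B_def using N1 by (rule Pr_pos)
  have fe: "poly f (N^(2*l)) < 0" if l: "l < k" for l
  proof -
    define x where "x = N^(2*l)"
    have x0: "x > 0" using x_def N0 by simp
    have h: "x * (poly B x)^2 \<ge> K * b * (poly A x)^2"
      using case1_bounds(1)[OF k c_def N_def l] unfolding pA pB x_def K_def b_def by simp
    have "poly f x = K*(b-x)*(poly A x)^2 - x*(poly B x)^2" by (rule pf)
    also have "\<dots> \<le> K*(b-x)*(poly A x)^2 - K*b*(poly A x)^2" using h by linarith
    also have "\<dots> = - (K*x*(poly A x)^2)" by (simp add: algebra_simps)
    also have "\<dots> < 0" using K0 x0 Apos[of x] by simp
    finally show ?thesis unfolding x_def .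
  qed
  have fo: "poly f (N^(2*l+1)) > 0" if l: "l < k" for l
  proof -
    define x where "x = N^(2*l+1)"
    have x0: "x > 0" using x_def N0 by simp
    have xle: "x \<le> N^(2*k-1)" unfolding x_def using N1 l by (intro power_increasing) auto
    have h: "x * (poly B x)^2 \<le> c * N^(2*k-1) * (poly A x)^2"
      using case1_bounds(2)[OF k c_def N_def l] unfolding pA pB x_def by simp
    have A2: "(poly A x)^2 > 0" using Apos[of x] x0 by simp
    have Kb: "K*(b-x) \<ge> 2*c*N^(2*k-1)" using xle K_def b_def c1 by (simp add: algebra_simps)
    have "c * N^(2*k-1) * (poly A x)^2 < 2*c*N^(2*k-1)*(poly A x)^2" using A2 c1 N0 by simp
    also have "\<dots> \<le> K*(b-x)*(poly A x)^2" using Kb A2 by (intro mult_right_mono) auto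
    finally have "x * (poly B x)^2 < K*(b-x)*(poly A x)^2" using h by linarith
    then show ?thesis unfolding pf x_def[symmetric] by linarith
  qed
  have f0: "poly f 0 > 0" using pf[of 0] K0 b0 Apos[of 0] by simp
  have fb: "poly f b < 0" using pf[of b] b0 Bpos[of b] by simp
  define t where "t j = (if j = 0 then 0 else if j \<le> 2*k then N^(j-1) else b)" for j
  have tsign: "(even j \<longrightarrow> poly f (t j) > 0) \<and> (odd j \<longrightarrow> poly f (t j) < 0)" if j: "j \<le> 2*k+1" for j
  proof (cases "j = 0")
    case True then show ?thesis using f0 t_def by simp
  next
    case j0: False
    show ?thesis
    proof (cases "j \<le> 2*k")
      case True
      then have tj: "t j = N^(j-1)" using j0 t_def by simp
      show ?thesis
      proof (cases "even (j-1)")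
        case True
        then obtain l where l: "j - 1 = 2*l" by (elim evenE)
        then have "l < k" using \<open>j \<le> 2*k\<close> j0 by simp
        moreover have "odd j" using l j0 by presburger
        ultimately show ?thesis using fe[of l] tj l by simp
      next
        case False
        then obtain l where l: "j - 1 = 2*l+1" by (metis oddE)
        then have "l < k" using \<open>j \<le> 2*k\<close> j0 by simp
        moreover have "even j" using l j0 by presburger
        ultimately show ?thesis using fo[of l] tj l by simp
      qed
    next
      case False
      then have "j = 2*k+1" using j by simp
      then show ?thesis using fb t_def by simp
    qed
  qed
  have sgn: "\<forall>i<2*k+1. poly f (t i) * poly f (t (Suc i)) < 0"
  proof (intro allI impI)
    fix i assume i: "i < 2*k+1"
    have s1: "(even i \<longrightarrow> poly f (t i) > 0) \<and> (odd i \<longrightarrow> poly f (t i) < 0)" using tsign i by simp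
    have s2: "(even (Suc i) \<longrightarrow> poly f (t (Suc i)) > 0) \<and> (odd (Suc i) \<longrightarrow> poly f (t (Suc i)) < 0)"
      using tsign[of "Suc i"] i by simp
    show "poly f (t i) * poly f (t (Suc i)) < 0"
      using s1 s2 by (cases "even i") (auto simp: mult_pos_neg mult_neg_pos)
  qed
  have tmono: "\<forall>i j. i < j \<longrightarrow> j \<le> 2*k+1 \<longrightarrow> t i < t j"
  proof (intro allI impI)
    fix i j :: nat assume ij: "i < j" "j \<le> 2*k+1"
    have pos: "t j > 0" using ij t_def N0 b0 by auto
    show "t i < t j"
    proof (cases "i = 0")
      case True then show ?thesis using pos t_def by simp
    next
      case False
      then have ti: "t i = N^(i-1)" using ij t_def by simp
      show ?thesis
      proof (cases "j \<le> 2*k")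
        case True
        then have "t j = N^(j-1)" using ij t_def by simp
        then show ?thesis using ti ij False N1 by (simp add: power_strict_increasing)
      next
        case False
        then have "t j = b" using t_def ij by simp
        moreover have "N^(i-1) \<le> N^(2*k-1)" using ij N1 False by (intro power_increasing) auto
        ultimately show ?thesis using ti Nb by simp
      qed
    qed
  qed
  have nz1: "[:b,-1:] \<noteq> (0::real poly)" "[:0,1:] \<noteq> (0::real poly)" by simp_all
  have nzA: "A^2 \<noteq> 0" "B^2 \<noteq> 0" by (simp_all add: A_def B_def Pr_nz)
  have dA: "degree (A^2) = 2*k" "degree (B^2) = 2*k"
    by (simp_all add: degree_power_eq A_def B_def Pr_nz degree_Pr)
  have lA: "lead_coeff (A^2) = 1" "lead_coeff (B^2) = 1"
    by (simp_all only: lead_coeff_power A_def B_def lead_Pr) simp_all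
  have dP: "degree P = 2*k+1" unfolding P_def using K0
    by (simp only: degree_smult_eq degree_mult_eq[OF nz1(1) nzA(1)] dA) simp
  have lP: "coeff P (2*k+1) = -K" unfolding dP[symmetric] unfolding P_def
    by (simp only: lead_coeff_smult lead_coeff_mult lA) simp
  have dQ: "degree Q = 2*k+1" unfolding Q_def
    by (simp only: degree_mult_eq[OF nz1(2) nzA(2)] dA) simp
  have lQ: "coeff Q (2*k+1) = 1" unfolding dQ[symmetric] unfolding Q_def
    by (simp only: lead_coeff_mult lA) simp
  have df: "degree f = 2*k+1"
  proof (rule antisym)
    show "degree f \<le> 2*k+1" unfolding f_def using dP dQ by (intro degree_diff_le) auto
    have "coeff f (2*k+1) \<noteq> 0" unfolding f_def using lP lQ K0 by simp
    then show "2*k+1 \<le> degree f" by (rule le_degree)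
  qed
  have fnz: "f \<noteq> 0" using df by auto
  obtain z where zt: "\<forall>i<2*k+1. t i < z i \<and> z i < t (Suc i)"
    and Zf: "{x. poly f x = 0} = z ` {..<2*k+1}"
    and oz: "\<forall>i<2*k+1. order (z i) f = 1"
    and zmono: "\<forall>i j. i < j \<longrightarrow> j < 2*k+1 \<longrightarrow> z i < z j"
    using ivt_roots[OF fnz df tmono sgn] by blast
  have t0: "t i \<ge> 0" for i using t_def N0 b0 by auto
  have tb: "i \<le> 2*k+1 \<Longrightarrow> t i \<le> b" for i
    using tmono[rule_format, of i "2*k+1"] t_def by (cases "i = 2*k+1") auto
  have zpos: "i < 2*k+1 \<Longrightarrow> 0 < z i" for i using zt t0[of i] by force
  have zb: "i < 2*k+1 \<Longrightarrow> z i < b" for i using zt tb[of "Suc i"] by force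
  have ZA: "poly A x = 0 \<longleftrightarrow> (\<exists>i<k. x = -(N^(2*i)))" for x
    unfolding A_def using Pr_root[OF N1, of k 0 x] by simp
  have ZB: "poly B x = 0 \<longleftrightarrow> (\<exists>i<k. x = -(N^(2*i+1)))" for x
    unfolding B_def using Pr_root[OF N1, of k 1 x] by simp
  have ZP: "poly P x = 0 \<longleftrightarrow> x = b \<or> (\<exists>i<k. x = -(N^(2*i)))" for x
    unfolding pP using K0 ZA[of x] by auto
  have ZQ: "poly Q x = 0 \<longleftrightarrow> x = 0 \<or> (\<exists>i<k. x = -(N^(2*i+1)))" for x
    unfolding pQ using ZB[of x] by auto
  have ordP: "order a P = order a [:b,-1:] + 2 * order a A" for a
  proof -
    have nzp: "[:b,-1:] * A^2 \<noteq> 0" using nz1 nzA by (metis mult_eq_0_iff)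
    have "order a P = order a ([:b,-1:] * A^2)" unfolding P_def using K0 by (simp add: order_smult)
    also have "\<dots> = order a [:b,-1:] + order a (A^2)" by (rule order_mult[OF nzp])
    also have "order a (A^2) = 2 * order a A" unfolding power2_eq_square
      using nzA by (subst order_mult) (auto simp: power2_eq_square)
    finally show ?thesis .
  qed
  have ordQ: "order a Q = order a [:0,1:] + 2 * order a B" for a
  proof -
    have nzp: "[:0,1:] * B^2 \<noteq> 0" using nz1 nzA by (metis mult_eq_0_iff)
    have "order a Q = order a [:0,1:] + order a (B^2)" unfolding Q_def by (rule order_mult[OF nzp])
    also have "order a (B^2) = 2 * order a B" unfolding power2_eq_square
      using nzA by (subst order_mult) (auto simp: power2_eq_square)
    finally show ?thesis .
  qed
  have pinj: "N^a = N^b' \<longleftrightarrow> a = b'" for a b' using N1 by (simp add: power_inject_exp)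
  have negP: "poly P (-(N^m)) = 0 \<longleftrightarrow> even m" if m: "m < 2*k" for m
  proof -
    have "-(N^m) \<noteq> b" using b0 N0 by (smt (verit) zero_less_power)
    moreover have "(\<exists>i<k. -(N^m) = -(N^(2*i))) \<longleftrightarrow> (\<exists>i<k. m = 2*i)"
      by (simp only: neg_equal_iff_equal pinj)
    ultimately have "poly P (-(N^m)) = 0 \<longleftrightarrow> (\<exists>i<k. m = 2*i)" unfolding ZP by blast
    also have "\<dots> \<longleftrightarrow> even m" using m by (auto elim!: evenE)
    finally show ?thesis .
  qed
  have negQ: "poly Q (-(N^m)) = 0 \<longleftrightarrow> odd m" if m: "m < 2*k" for m
  proof -
    have "-(N^m) \<noteq> 0" using N0 by simp
    moreover have "(\<exists>i<k. -(N^m) = -(N^(2*i+1))) \<longleftrightarrow> (\<exists>i<k. m = 2*i+1)"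
      by (simp only: neg_equal_iff_equal pinj)
    ultimately have "poly Q (-(N^m)) = 0 \<longleftrightarrow> (\<exists>i<k. m = 2*i+1)" unfolding ZQ by blast
    also have "\<dots> \<longleftrightarrow> odd m" using m by (auto elim!: oddE)
    finally show ?thesis .
  qed
  have fnonpos: "x \<le> 0 \<Longrightarrow> poly f x \<noteq> 0" for x
  proof
    assume "x \<le> 0" "poly f x = 0"
    then have "x \<in> z ` {..<2*k+1}" using Zf by blast
    then show False using zpos \<open>x \<le> 0\<close> by force
  qed
  have ordPneg: "order (-(N^(2*l))) P = 2" if "l < k" for l
  proof -
    have "order (-(N^(2*l))) A = 1" unfolding A_def using Pr_order[OF N1 that, of 0] by simp
    moreover have "-(N^(2*l)) \<noteq> b" using b0 N0 by (smt (verit) zero_less_power)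
    ultimately show ?thesis unfolding ordP order_neg_lin by simp
  qed
  have ordQneg: "order (-(N^(2*l+1))) Q = 2" if "l < k" for l
  proof -
    have "order (-(N^(2*l+1))) B = 1" unfolding B_def using Pr_order[OF N1 that, of 1] by simp
    moreover have "-(N^(2*l+1)) \<noteq> 0" using N0 by simp
    ultimately show ?thesis unfolding ordQ order_lin by simp
  qed
  have ordPb: "order b P = 1"
  proof -
    have "order b A = 0" using Apos[of b] b0 by (intro order_0I) simp
    then show ?thesis unfolding ordP order_neg_lin by simp
  qed
  have ordQ0: "order 0 Q = 1"
  proof -
    have "order 0 B = 0" using Bpos[of 0] by (intro order_0I) simp
    then show ?thesis unfolding ordQ order_lin by simp
  qed
  have P0: "poly P 0 \<noteq> 0" using ZP[of 0] b0 N0 by auto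
  have Qb: "poly Q b \<noteq> 0" using ZQ[of b] b0 N0 by (smt (verit) zero_less_power)
  have Pz: "poly P (z j) \<noteq> 0" if "j < 2*k+1" for j
    using ZP[of "z j"] zpos[OF that] zb[OF that] N0 by (smt (verit) zero_less_power)
  have Qz: "poly Q (z j) \<noteq> 0" if "j < 2*k+1" for j
    using ZQ[of "z j"] zpos[OF that] N0 by (smt (verit) zero_less_power)
  have fz: "poly f (z j) = 0" if "j < 2*k+1" for j using Zf that by blast
  define s where "s = (\<lambda>i. if i < 2*k then (if even i then (Lq,2) else (Lp,2)) else if i = 2*k then (Lq,1)
              else if i < 4*k+2 then (Lr,1) else (Lp,1::nat))"
  have Seq: "concat (replicate k [(Lq, 2), (Lp, 2)]) @ [(Lq, 1)] @ replicate (2 * k + 1) (Lr, 1) @ [(Lp, 1)]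
     = map s [0..<4*k+3]" unfolding s_def by (rule scheme1)
  define r where "r i = (if i < 2*k then -(N^(2*k-1-i)) else if i = 2*k then 0
     else if i < 4*k+2 then z (i - (2*k+1)) else b)" for i
  have rmono: "\<forall>i j. i < j \<longrightarrow> j < 4*k+3 \<longrightarrow> r i < r j"
  proof (intro allI impI)
    fix i j :: nat assume ij: "i < j" "j < 4*k+3"
    have ri_le: "i \<le> 2*k \<Longrightarrow> r i \<le> 0" using N0 r_def by auto
    show "r i < r j"
    proof (cases "j < 2*k")
      case True
      have "N^(2*k-1-j) < N^(2*k-1-i)" using N1 ij True by (intro power_strict_increasing) auto
      then show ?thesis using True ij r_def by simp
    next
      case jge: False
      show ?thesis
      proof (cases "j = 2*k")
        case True then show ?thesis using ij r_def N0 by simp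
      next
        case False
        show ?thesis
        proof (cases "j < 4*k+2")
          case True
          then have rj: "r j = z (j - (2*k+1))" using jge False r_def by simp
          have zj: "0 < z (j - (2*k+1))" using zpos True by simp
          show ?thesis
          proof (cases "i \<le> 2*k")
            case True then show ?thesis using ri_le rj zj by simp
          next
            case False
            then have "r i = z (i - (2*k+1))" using r_def ij by simp
            moreover have "z (i - (2*k+1)) < z (j - (2*k+1))" using zmono False ij True by simp
            ultimately show ?thesis using rj by simp
          qed
        next
          case False
          then have rj: "r j = b" using jge \<open>j \<noteq> 2*k\<close> r_def by simp
          show ?thesis
          proof (cases "i \<le> 2*k")
            case True then show ?thesis using ri_le rj b0 by simp
          next
            case False
            then have "r i = z (i - (2*k+1))" using r_def ij \<open>\<not> j < 4*k+2\<close> by simp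
            moreover have "z (i - (2*k+1)) < b" using zb False ij \<open>\<not> j < 4*k+2\<close> by simp
            ultimately show ?thesis using rj by simp
          qed
        qed
      qed
    qed
  qed
  have rset: "{x. poly P x = 0 \<or> poly Q x = 0 \<or> poly (P - Q) x = 0} = r ` {..<4*k+3}"
  proof (intro set_eqI iffI)
    fix x assume "x \<in> {x. poly P x = 0 \<or> poly Q x = 0 \<or> poly (P - Q) x = 0}"
    then consider "x = b" | i where "i < k" "x = -(N^(2*i))" | "x = 0" | i where "i < k" "x = -(N^(2*i+1))"
      | "poly f x = 0" unfolding ZP ZQ f_def by auto
    then show "x \<in> r ` {..<4*k+3}"
    proof cases
      case 1 then show ?thesis by (intro image_eqI[of _ _ "4*k+2"]) (auto simp: r_def)
    next
      case (2 i)
      then show ?thesis by (intro image_eqI[of _ _ "2*k-1-2*i"]) (auto simp: r_def)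
    next
      case 3 then show ?thesis by (intro image_eqI[of _ _ "2*k"]) (auto simp: r_def)
    next
      case (4 i)
      then show ?thesis by (intro image_eqI[of _ _ "2*k-2-2*i"]) (auto simp: r_def)
    next
      case 5
      then obtain j where j: "j < 2*k+1" "x = z j" using Zf by blast
      then show ?thesis by (intro image_eqI[of _ _ "2*k+1+j"]) (auto simp: r_def)
    qed
  next
    fix x assume "x \<in> r ` {..<4*k+3}"
    then obtain i where i: "i < 4*k+3" "x = r i" by auto
    show "x \<in> {x. poly P x = 0 \<or> poly Q x = 0 \<or> poly (P - Q) x = 0}"
    proof (cases "i < 2*k")
      case True
      then have "x = -(N^(2*k-1-i))" using i r_def by simp
      then show ?thesis using negP[of "2*k-1-i"] negQ[of "2*k-1-i"] True by auto
    next
      case False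
      then show ?thesis using i r_def ZQ[of 0] ZP[of b] fz[of "i - (2*k+1)"] f_def
        by (auto split: if_splits)
    qed
  qed
  have rcond: "\<forall>i<4*k+3. (poly P (r i) = 0 \<longleftrightarrow> fst (s i) = Lp) \<and>
           (poly Q (r i) = 0 \<longleftrightarrow> fst (s i) = Lq) \<and>
           (poly (P - Q) (r i) = 0 \<longleftrightarrow> fst (s i) = Lr) \<and>
           order (r i) (label_poly P Q (fst (s i))) = snd (s i)"
  proof (intro allI impI)
    fix i assume i: "i < 4*k+3"
    show "(poly P (r i) = 0 \<longleftrightarrow> fst (s i) = Lp) \<and>
           (poly Q (r i) = 0 \<longleftrightarrow> fst (s i) = Lq) \<and>
           (poly (P - Q) (r i) = 0 \<longleftrightarrow> fst (s i) = Lr) \<and>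
           order (r i) (label_poly P Q (fst (s i))) = snd (s i)"
    proof (cases "i < 2*k")
      case True
      define m where "m = 2*k-1-i"
      have m: "m < 2*k" "r i = -(N^m)" using True m_def r_def by auto
      have fneg: "poly (P - Q) (r i) \<noteq> 0" using fnonpos[of "r i"] m N0 f_def by simp
      show ?thesis
      proof (cases "even i")
        case True
        then have om: "odd m" using m_def \<open>i < 2*k\<close> by presburger
        then obtain l where l: "m = 2*l+1" by (elim oddE)
        have "l < k" using l m by simp
        then show ?thesis using True \<open>i < 2*k\<close> negP[OF m(1)] negQ[OF m(1)] om fneg m l ordQneg
          by (simp add: s_def label_poly_def)
      next
        case False
        then have om: "even m" using m_def \<open>i < 2*k\<close> by presburger
        then obtain l where l: "m = 2*l" by (elim evenE)
        have "l < k" using l m by simp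
        then show ?thesis using False \<open>i < 2*k\<close> negP[OF m(1)] negQ[OF m(1)] om fneg m l ordPneg
          by (simp add: s_def label_poly_def)
      qed
    next
      case False
      show ?thesis
      proof (cases "i = 2*k")
        case True
        then show ?thesis using P0 ordQ0 fnonpos[of 0] ZQ[of 0] f_def
          by (simp add: s_def r_def label_poly_def)
      next
        case i2: False
        show ?thesis
        proof (cases "i < 4*k+2")
          case True
          define j where "j = i - (2*k+1)"
          have j: "j < 2*k+1" "r i = z j" using True False i2 j_def r_def by auto
          show ?thesis using j Pz[OF j(1)] Qz[OF j(1)] fz[OF j(1)] oz False i2 True f_def
            by (simp add: s_def label_poly_def)
        next
          case i3: False
          then have "r i = b" using False i2 r_def by simp
          then show ?thesis using i3 False i2 ZP[of b] Qb fb ordPb f_def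
            by (simp add: s_def label_poly_def)
        qed
      qed
    qed
  qed
  have dPQ: "degree (P - Q) = 2*k+1" using df f_def by simp
  show ?thesis unfolding Seq by (rule realizable_intro[OF dPQ refl rmono rset rcond])
qed




lemma case2:
  shows "realizable (concat (replicate k [(Lq, 2), (Lp, 2)]) @ [(Lq, 2), (Lp, 1)] @
                        replicate (2 * k + 2) (Lr, 1) @ [(Lp, 1)]) (2 * k + 2)"
proof -
  define c :: real where "c = 4^k"
  define N :: real where "N = 16*c^2"
  define K :: real where "K = 8*c"
  define b :: real where "b = 2*N^(2*k)"
  define A where "A = Pr N k 1"
  define B where "B = Pr N (Suc k) 0"
  define L where "L = [:0,1:] * [:b,-1::real:]"
  define P where "P = smult K (L * A^2)"
  define Q where "Q = B^2"
  define f where "f = P - Q"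
  have c1: "c \<ge> 1" using c_def by simp
  have N1: "N > 1" using N_def c1 by (smt (verit) one_le_power power2_eq_square)
  have N0: "N > 0" using N1 by simp
  have K0: "K > 0" using K_def c1 by simp
  have b0: "b > 0" using b_def N0 by simp
  have Nb: "N^(2*k) < b" using b_def N0 by simp
  have pA: "poly A x = (\<Prod>i<k. x + N^(2*i+1))" for x unfolding A_def poly_Pr by simp
  have pB: "poly B x = (\<Prod>i<Suc k. x + N^(2*i))" for x unfolding B_def poly_Pr by simp
  have pP: "poly P x = K*x*(b-x)*(poly A x)^2" for x unfolding P_def L_def by (simp add: algebra_simps)
  have pQ: "poly Q x = (poly B x)^2" for x unfolding Q_def by simp
  have pf: "poly f x = K*x*(b-x)*(poly A x)^2 - (poly B x)^2" for x unfolding f_def using pP pQ by simp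
  have Apos: "x \<ge> 0 \<Longrightarrow> poly A x > 0" for x unfolding A_def using N1 by (rule Pr_pos)
  have Bpos: "x \<ge> 0 \<Longrightarrow> poly B x > 0" for x unfolding B_def using N1 by (rule Pr_pos)
  have fe: "poly f (N^(2*l)) > 0" if l: "l \<le> k" for l
  proof -
    define x where "x = N^(2*l)"
    have x0: "x > 0" using x_def N0 by simp
    have xle: "x \<le> N^(2*k)" unfolding x_def using N1 l by (intro power_increasing) auto
    have h: "(poly B x)^2 \<le> 4*c*N^(2*k)*x*(poly A x)^2"
      using case2_bound_even[OF c_def N_def l x_def] unfolding pA pB by simp
    have A2: "x*(poly A x)^2 > 0" using Apos[of x] x0 by simp
    have Kb: "K*(b-x) \<ge> 8*c*N^(2*k)" using xle K_def b_def c1 by (simp add: algebra_simps)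
    have "4*c*N^(2*k)*(x*(poly A x)^2) < 8*c*N^(2*k)*(x*(poly A x)^2)" using A2 c1 N0 by simp
    also have "\<dots> \<le> K*(b-x)*(x*(poly A x)^2)" using Kb A2 by (intro mult_right_mono) auto
    finally have "(poly B x)^2 < K*(b-x)*(x*(poly A x)^2)" using h by (simp add: algebra_simps)
    then show ?thesis unfolding pf x_def[symmetric] by (simp add: algebra_simps)
  qed
  have fo: "poly f (N^(2*l+1)) < 0" if l: "l < k" for l
  proof -
    define x where "x = N^(2*l+1)"
    have x0: "x > 0" using x_def N0 by simp
    have h: "K*b*x*(poly A x)^2 \<le> (poly B x)^2"
      using case2_bound_odd[OF c_def N_def l x_def] unfolding pA pB K_def b_def by simp
    have "poly f x = K*x*(b-x)*(poly A x)^2 - (poly B x)^2" by (rule pf)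
    also have "\<dots> \<le> K*x*(b-x)*(poly A x)^2 - K*b*x*(poly A x)^2" using h by linarith
    also have "\<dots> = - (K*x*x*(poly A x)^2)" by (simp add: algebra_simps)
    also have "\<dots> < 0" using K0 x0 Apos[of x] by simp
    finally show ?thesis unfolding x_def .
  qed
  have f0: "poly f 0 < 0" using pf[of 0] Bpos[of 0] by simp
  have fb: "poly f b < 0" using pf[of b] b0 Bpos[of b] by simp
  define t where "t j = (if j = 0 then 0 else if j \<le> 2*k+1 then N^(j-1) else b)" for j
  have tsign: "(odd j \<longrightarrow> poly f (t j) > 0) \<and> (even j \<longrightarrow> poly f (t j) < 0)" if j: "j \<le> 2*k+2" for j
  proof (cases "j = 0")
    case True then show ?thesis using f0 t_def by simp
  next
    case j0: False
    show ?thesis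
    proof (cases "j \<le> 2*k+1")
      case True
      then have tj: "t j = N^(j-1)" using j0 t_def by simp
      show ?thesis
      proof (cases "even (j-1)")
        case True
        then obtain l where l: "j - 1 = 2*l" by (elim evenE)
        then have "l \<le> k" using \<open>j \<le> 2*k+1\<close> j0 by simp
        moreover have "odd j" using l j0 by presburger
        ultimately show ?thesis using fe[of l] tj l by simp
      next
        case False
        then obtain l where l: "j - 1 = 2*l+1" by (metis oddE)
        then have "l < k" using \<open>j \<le> 2*k+1\<close> j0 by simp
        moreover have "even j" using l j0 by presburger
        ultimately show ?thesis using fo[of l] tj l by simp
      qed
    next
      case False
      then have "j = 2*k+2" using j by simp
      then show ?thesis using fb t_def by simp
    qed
  qed
  have sgn: "\<forall>i<2*k+2. poly f (t i) * poly f (t (Suc i)) < 0"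
  proof (intro allI impI)
    fix i assume i: "i < 2*k+2"
    have s1: "(odd i \<longrightarrow> poly f (t i) > 0) \<and> (even i \<longrightarrow> poly f (t i) < 0)" using tsign i by simp
    have s2: "(odd (Suc i) \<longrightarrow> poly f (t (Suc i)) > 0) \<and> (even (Suc i) \<longrightarrow> poly f (t (Suc i)) < 0)"
      using tsign[of "Suc i"] i by simp
    show "poly f (t i) * poly f (t (Suc i)) < 0"
      using s1 s2 by (cases "even i") (auto simp: mult_pos_neg mult_neg_pos)
  qed
  have tmono: "\<forall>i j. i < j \<longrightarrow> j \<le> 2*k+2 \<longrightarrow> t i < t j"
  proof (intro allI impI)
    fix i j :: nat assume ij: "i < j" "j \<le> 2*k+2"
    have pos: "t j > 0" using ij t_def N0 b0 by auto
    show "t i < t j"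
    proof (cases "i = 0")
      case True then show ?thesis using pos t_def by simp
    next
      case False
      then have ti: "t i = N^(i-1)" using ij t_def by simp
      show ?thesis
      proof (cases "j \<le> 2*k+1")
        case True
        then have "t j = N^(j-1)" using ij t_def by simp
        then show ?thesis using ti ij False N1 by (simp add: power_strict_increasing)
      next
        case False
        then have "t j = b" using t_def ij by simp
        moreover have "N^(i-1) \<le> N^(2*k)" using ij N1 False by (intro power_increasing) auto
        ultimately show ?thesis using ti Nb by simp
      qed
    qed
  qed
  have nz1: "L \<noteq> 0" unfolding L_def by simp
  have dL: "degree L = 2" unfolding L_def by simp
  have lL: "lead_coeff L = -1" unfolding L_def by simp
  have nzA: "A^2 \<noteq> 0" "B^2 \<noteq> 0" by (simp_all add: A_def B_def Pr_nz)
  have dA: "degree (A^2) = 2*k" "degree (B^2) = 2*k+2"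
    by (simp_all add: degree_power_eq A_def B_def Pr_nz degree_Pr)
  have lA: "lead_coeff (A^2) = 1" "lead_coeff (B^2) = 1"
    by (simp_all only: lead_coeff_power A_def B_def lead_Pr) simp_all
  have dP: "degree P = 2*k+2" unfolding P_def using K0
    by (simp only: degree_smult_eq degree_mult_eq[OF nz1 nzA(1)] dA dL) simp
  have lP: "coeff P (2*k+2) = -K" unfolding dP[symmetric] unfolding P_def
    by (simp only: lead_coeff_smult lead_coeff_mult lA lL mult_1_right mult_minus1_right)
  have dQ: "degree Q = 2*k+2" unfolding Q_def using dA by simp
  have lQ: "coeff Q (2*k+2) = 1" unfolding dQ[symmetric] unfolding Q_def using lA by simp
  have df: "degree f = 2*k+2"
  proof (rule antisym)
    show "degree f \<le> 2*k+2" unfolding f_def using dP dQ by (intro degree_diff_le) auto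
    have "coeff f (2*k+2) \<noteq> 0" unfolding f_def using lP lQ K0 by simp
    then show "2*k+2 \<le> degree f" by (rule le_degree)
  qed
  have fnz: "f \<noteq> 0" using df by auto
  obtain z where zt: "\<forall>i<2*k+2. t i < z i \<and> z i < t (Suc i)"
    and Zf: "{x. poly f x = 0} = z ` {..<2*k+2}"
    and oz: "\<forall>i<2*k+2. order (z i) f = 1"
    and zmono: "\<forall>i j. i < j \<longrightarrow> j < 2*k+2 \<longrightarrow> z i < z j"
    using ivt_roots[OF fnz df tmono sgn] by blast
  have t0: "t i \<ge> 0" for i using t_def N0 b0 by auto
  have tb: "i \<le> 2*k+2 \<Longrightarrow> t i \<le> b" for i
    using tmono[rule_format, of i "2*k+2"] t_def by (cases "i = 2*k+2") auto
  have zpos: "i < 2*k+2 \<Longrightarrow> 0 < z i" for i using zt t0[of i] by force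
  have zb: "i < 2*k+2 \<Longrightarrow> z i < b" for i using zt tb[of "Suc i"] by force
  have ZA: "poly A x = 0 \<longleftrightarrow> (\<exists>i<k. x = -(N^(2*i+1)))" for x
    unfolding A_def using Pr_root[OF N1, of k 1 x] by simp
  have ZB: "poly B x = 0 \<longleftrightarrow> (\<exists>i<Suc k. x = -(N^(2*i)))" for x
    unfolding B_def using Pr_root[OF N1, of "Suc k" 0 x] by simp
  have ZP: "poly P x = 0 \<longleftrightarrow> x = 0 \<or> x = b \<or> (\<exists>i<k. x = -(N^(2*i+1)))" for x
    unfolding pP using K0 ZA[of x] by auto
  have ZQ: "poly Q x = 0 \<longleftrightarrow> (\<exists>i<Suc k. x = -(N^(2*i)))" for x
    unfolding pQ using ZB[of x] by auto
  have ordP: "order a P = order a [:0,1:] + order a [:b,-1:] + 2 * order a A" for a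
  proof -
    have nzp: "L * A^2 \<noteq> 0" using nz1 nzA by (metis mult_eq_0_iff)
    have "order a P = order a (L * A^2)" unfolding P_def using K0 by (simp add: order_smult)
    also have "\<dots> = order a L + order a (A^2)" by (rule order_mult[OF nzp])
    also have "order a L = order a [:0,1:] + order a [:b,-1:]" unfolding L_def
      by (rule order_mult) simp
    also have "order a (A^2) = 2 * order a A" unfolding power2_eq_square
      using nzA by (subst order_mult) (auto simp: power2_eq_square)
    finally show ?thesis .
  qed
  have ordQ: "order a Q = 2 * order a B" for a
    unfolding Q_def power2_eq_square using nzA by (subst order_mult) (auto simp: power2_eq_square)
  have pinj: "N^a = N^b' \<longleftrightarrow> a = b'" for a b' using N1 by (simp add: power_inject_exp)
  have negP: "poly P (-(N^m)) = 0 \<longleftrightarrow> odd m" if m: "m \<le> 2*k" for m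
  proof -
    have "-(N^m) \<noteq> b" "-(N^m) \<noteq> 0" using b0 N0 by (smt (verit) zero_less_power)+
    moreover have "(\<exists>i<k. -(N^m) = -(N^(2*i+1))) \<longleftrightarrow> (\<exists>i<k. m = 2*i+1)"
      by (simp only: neg_equal_iff_equal pinj)
    ultimately have "poly P (-(N^m)) = 0 \<longleftrightarrow> (\<exists>i<k. m = 2*i+1)" unfolding ZP by blast
    also have "\<dots> \<longleftrightarrow> odd m" using m by (auto elim!: oddE)
    finally show ?thesis .
  qed
  have negQ: "poly Q (-(N^m)) = 0 \<longleftrightarrow> even m" if m: "m \<le> 2*k" for m
  proof -
    have "(\<exists>i<Suc k. -(N^m) = -(N^(2*i))) \<longleftrightarrow> (\<exists>i<Suc k. m = 2*i)"
      by (simp only: neg_equal_iff_equal pinj)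
    then have "poly Q (-(N^m)) = 0 \<longleftrightarrow> (\<exists>i<Suc k. m = 2*i)" unfolding ZQ by blast
    also have "\<dots> \<longleftrightarrow> even m" using m by (auto elim!: evenE)
    finally show ?thesis .
  qed
  have fnonpos: "x \<le> 0 \<Longrightarrow> poly f x \<noteq> 0" for x
  proof
    assume "x \<le> 0" "poly f x = 0"
    then have "x \<in> z ` {..<2*k+2}" using Zf by blast
    then show False using zpos \<open>x \<le> 0\<close> by force
  qed
  have ordPneg: "order (-(N^(2*l+1))) P = 2" if "l < k" for l
  proof -
    have "order (-(N^(2*l+1))) A = 1" unfolding A_def using Pr_order[OF N1 that, of 1] by simp
    moreover have "-(N^(2*l+1)) \<noteq> b" "-(N^(2*l+1)) \<noteq> 0" using b0 N0 by (smt (verit) zero_less_power)+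
    ultimately show ?thesis unfolding ordP order_neg_lin order_lin by simp
  qed
  have ordQneg: "order (-(N^(2*l))) Q = 2" if "l \<le> k" for l
  proof -
    have "l < Suc k" using that by simp
    then have "order (-(N^(2*l))) B = 1" unfolding B_def using Pr_order[OF N1, of l "Suc k" 0] by simp
    then show ?thesis unfolding ordQ by simp
  qed
  have ordPb: "order b P = 1"
  proof -
    have "order b A = 0" using Apos[of b] b0 by (intro order_0I) simp
    then show ?thesis unfolding ordP order_neg_lin order_lin using b0 by simp
  qed
  have ordP0: "order 0 P = 1"
  proof -
    have "order 0 A = 0" using Apos[of 0] by (intro order_0I) simp
    then show ?thesis unfolding ordP order_neg_lin order_lin using b0 by simp
  qed
  have Q0: "poly Q 0 \<noteq> 0" using pQ[of 0] Bpos[of 0] by simp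
  have Qb: "poly Q b \<noteq> 0" using pQ[of b] Bpos[of b] b0 by simp
  have Pz: "poly P (z j) \<noteq> 0" if "j < 2*k+2" for j
    using ZP[of "z j"] zpos[OF that] zb[OF that] N0 by (smt (verit) zero_less_power)
  have Qz: "poly Q (z j) \<noteq> 0" if "j < 2*k+2" for j
    using pQ[of "z j"] Bpos[of "z j"] zpos[OF that] by simp
  have fz: "poly f (z j) = 0" if "j < 2*k+2" for j using Zf that by blast
  define s where "s = (\<lambda>i. if i \<le> 2*k then (if even i then (Lq,2) else (Lp,2)) else if i = 2*k+1 then (Lp,1)
              else if i < 4*k+4 then (Lr,1) else (Lp,1::nat))"
  have Seq: "concat (replicate k [(Lq, 2), (Lp, 2)]) @ [(Lq, 2), (Lp, 1)] @ replicate (2 * k + 2) (Lr, 1) @ [(Lp, 1)]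
     = map s [0..<4*k+5]" unfolding s_def by (rule scheme2)
  define r where "r i = (if i \<le> 2*k then -(N^(2*k-i)) else if i = 2*k+1 then 0
     else if i < 4*k+4 then z (i - (2*k+2)) else b)" for i
  have rmono: "\<forall>i j. i < j \<longrightarrow> j < 4*k+5 \<longrightarrow> r i < r j"
  proof (intro allI impI)
    fix i j :: nat assume ij: "i < j" "j < 4*k+5"
    have ri_le: "i \<le> 2*k+1 \<Longrightarrow> r i \<le> 0" using N0 r_def by auto
    show "r i < r j"
    proof (cases "j \<le> 2*k")
      case True
      have "N^(2*k-j) < N^(2*k-i)" using N1 ij True by (intro power_strict_increasing) auto
      then show ?thesis using True ij r_def by simp
    next
      case jge: False
      show ?thesis
      proof (cases "j = 2*k+1")
        case True then show ?thesis using ij r_def N0 by simp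
      next
        case False
        show ?thesis
        proof (cases "j < 4*k+4")
          case True
          then have rj: "r j = z (j - (2*k+2))" using jge False r_def by simp
          have zj: "0 < z (j - (2*k+2))" using zpos True by simp
          show ?thesis
          proof (cases "i \<le> 2*k+1")
            case True then show ?thesis using ri_le rj zj by simp
          next
            case False
            then have "r i = z (i - (2*k+2))" using r_def ij by simp
            moreover have "z (i - (2*k+2)) < z (j - (2*k+2))" using zmono False ij True by simp
            ultimately show ?thesis using rj by simp
          qed
        next
          case False
          then have rj: "r j = b" using jge \<open>j \<noteq> 2*k+1\<close> r_def by simp
          show ?thesis
          proof (cases "i \<le> 2*k+1")
            case True then show ?thesis using ri_le rj b0 by simp
          next
            case False
            then have "r i = z (i - (2*k+2))" using r_def ij \<open>\<not> j < 4*k+4\<close> by simp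
            moreover have "z (i - (2*k+2)) < b" using zb False ij \<open>\<not> j < 4*k+4\<close> by simp
            ultimately show ?thesis using rj by simp
          qed
        qed
      qed
    qed
  qed
  have rset: "{x. poly P x = 0 \<or> poly Q x = 0 \<or> poly (P - Q) x = 0} = r ` {..<4*k+5}"
  proof (intro set_eqI iffI)
    fix x assume "x \<in> {x. poly P x = 0 \<or> poly Q x = 0 \<or> poly (P - Q) x = 0}"
    then consider "x = b" | i where "i < k" "x = -(N^(2*i+1))" | "x = 0" | i where "i < Suc k" "x = -(N^(2*i))"
      | "poly f x = 0" unfolding ZP ZQ f_def by auto
    then show "x \<in> r ` {..<4*k+5}"
    proof cases
      case 1 then show ?thesis by (intro image_eqI[of _ _ "4*k+4"]) (auto simp: r_def)
    next
      case (2 i)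
      then show ?thesis by (intro image_eqI[of _ _ "2*k-1-2*i"]) (auto simp: r_def)
    next
      case 3 then show ?thesis by (intro image_eqI[of _ _ "2*k+1"]) (auto simp: r_def)
    next
      case (4 i)
      then show ?thesis by (intro image_eqI[of _ _ "2*k-2*i"]) (auto simp: r_def)
    next
      case 5
      then obtain j where j: "j < 2*k+2" "x = z j" using Zf by blast
      then show ?thesis by (intro image_eqI[of _ _ "2*k+2+j"]) (auto simp: r_def)
    qed
  next
    fix x assume "x \<in> r ` {..<4*k+5}"
    then obtain i where i: "i < 4*k+5" "x = r i" by auto
    show "x \<in> {x. poly P x = 0 \<or> poly Q x = 0 \<or> poly (P - Q) x = 0}"
    proof (cases "i \<le> 2*k")
      case True
      then have "x = -(N^(2*k-i))" using i r_def by simp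
      then show ?thesis using negP[of "2*k-i"] negQ[of "2*k-i"] True by auto
    next
      case False
      then show ?thesis using i r_def ZP[of 0] ZP[of b] fz[of "i - (2*k+2)"] f_def
        by (auto split: if_splits)
    qed
  qed
  have rcond: "\<forall>i<4*k+5. (poly P (r i) = 0 \<longleftrightarrow> fst (s i) = Lp) \<and>
           (poly Q (r i) = 0 \<longleftrightarrow> fst (s i) = Lq) \<and>
           (poly (P - Q) (r i) = 0 \<longleftrightarrow> fst (s i) = Lr) \<and>
           order (r i) (label_poly P Q (fst (s i))) = snd (s i)"
  proof (intro allI impI)
    fix i assume i: "i < 4*k+5"
    show "(poly P (r i) = 0 \<longleftrightarrow> fst (s i) = Lp) \<and>
           (poly Q (r i) = 0 \<longleftrightarrow> fst (s i) = Lq) \<and>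
           (poly (P - Q) (r i) = 0 \<longleftrightarrow> fst (s i) = Lr) \<and>
           order (r i) (label_poly P Q (fst (s i))) = snd (s i)"
    proof (cases "i \<le> 2*k")
      case True
      define m where "m = 2*k-i"
      have m: "m \<le> 2*k" "r i = -(N^m)" using True m_def r_def by auto
      have fneg: "poly (P - Q) (r i) \<noteq> 0" using fnonpos[of "r i"] m N0 f_def by simp
      show ?thesis
      proof (cases "even i")
        case True
        then have om: "even m" using m_def \<open>i \<le> 2*k\<close> by presburger
        then obtain l where l: "m = 2*l" by (elim evenE)
        have "l \<le> k" using l m by simp
        then show ?thesis using True \<open>i \<le> 2*k\<close> negP[OF m(1)] negQ[OF m(1)] om fneg m l ordQneg
          by (simp add: s_def label_poly_def)
      next
        case False
        then have om: "odd m" using m_def \<open>i \<le> 2*k\<close> by presburger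
        then obtain l where l: "m = 2*l+1" by (elim oddE)
        have "l < k" using l m by simp
        then show ?thesis using False \<open>i \<le> 2*k\<close> negP[OF m(1)] negQ[OF m(1)] om fneg m l ordPneg
          by (simp add: s_def label_poly_def)
      qed
    next
      case False
      show ?thesis
      proof (cases "i = 2*k+1")
        case True
        then show ?thesis using Q0 ordP0 fnonpos[of 0] ZP[of 0] f_def
          by (simp add: s_def r_def label_poly_def)
      next
        case i2: False
        show ?thesis
        proof (cases "i < 4*k+4")
          case True
          define j where "j = i - (2*k+2)"
          have j: "j < 2*k+2" "r i = z j" using True False i2 j_def r_def by auto
          show ?thesis using j Pz[OF j(1)] Qz[OF j(1)] fz[OF j(1)] oz False i2 True f_def
            by (simp add: s_def label_poly_def)
        next
          case i3: False
          then have "r i = b" using False i2 r_def by simp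
          then show ?thesis using i3 False i2 ZP[of b] Qb fb ordPb f_def
            by (simp add: s_def label_poly_def)
        qed
      qed
    qed
  qed
  have dPQ: "degree (P - Q) = 2*k+2" using df f_def by simp
  show ?thesis unfolding Seq by (rule realizable_intro[OF dPQ refl rmono rset rcond])
qed


theorem proposition3p2:
  shows "(\<forall>k::nat. k > 0 \<longrightarrow>
            realizable (concat (replicate k [(Lq, 2), (Lp, 2)]) @ [(Lq, 1)] @
                        replicate (2 * k + 1) (Lr, 1) @ [(Lp, 1)]) (2 * k + 1)) \<and>
         (\<forall>k::nat.
            realizable (concat (replicate k [(Lq, 2), (Lp, 2)]) @ [(Lq, 2), (Lp, 1)] @
                        replicate (2 * k + 2) (Lr, 1) @ [(Lp, 1)]) (2 * k + 2))"
  using case1 case2 by blast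

end
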